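(* Let $K$ be a field of characteristic $0$ or $>n$ and $P=K[v_1,\dots,v_n]$. Let $p\in P$ be a monomial and write $p=v_1^rv$ with $v$ a monomial not divisible by $v_1$. Then every Artin monomial occurring (with nonzero coefficient) in the Artin reduction of $p$ has $v_1$-exponent at least $r$.
   Context: Let $e_1,\dots,e_n$ be the elementary symmetric polynomials in $v_1,\dots,v_n$. An Artin monomial is $v_1^{l_1}\cdots v_n^{l_n}$ with $0\le l_i\le n-i$ for all $i$; the Artin monomials form a $K$-basis of $P/(e_1,\dots,e_n)$. The Artin reduction of $p\in P$ is the unique $K$-linear combination $p'$ of Artin monomials with $p\equiv p'$ modulo $(e_1,\dots,e_n)$. *)

theory Defs
  imports Main "HOL-Library.Poly_Mapping"
begin

text \<open>Multivariate polynomials over a field K are represented as finitely supported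
  maps from monomials (exponent vectors \<open>nat \<Rightarrow>\<^sub>0 nat\<close>) to coefficients.\<close>

type_synonym 'a mpoly = "(nat \<Rightarrow>\<^sub>0 nat) \<Rightarrow>\<^sub>0 'a"

definition poly_in :: "nat \<Rightarrow> ('a::zero) mpoly \<Rightarrow> bool" where
  "poly_in n f \<longleftrightarrow> (\<forall>m\<in>Poly_Mapping.keys f. Poly_Mapping.keys m \<subseteq> {1..n})"

definition var :: "nat \<Rightarrow> ('a::{zero,one}) mpoly" where
  "var i = Poly_Mapping.single (Poly_Mapping.single i 1) 1"

definition elem_sym :: "nat \<Rightarrow> nat \<Rightarrow> ('a::comm_ring_1) mpoly" where
  "elem_sym n k = (\<Sum>S\<in>{S. S \<subseteq> {1..n} \<and> card S = k}.
       Poly_Mapping.single (\<Sum>i\<in>S. Poly_Mapping.single i 1) 1)"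

definition sym_ideal :: "nat \<Rightarrow> ('a::comm_ring_1) mpoly set" where
  "sym_ideal n = {(\<Sum>k=1..n. q k * elem_sym n k) | q. \<forall>k. poly_in n (q k)}"

definition artin_monomial :: "nat \<Rightarrow> (nat \<Rightarrow>\<^sub>0 nat) \<Rightarrow> bool" where
  "artin_monomial n m \<longleftrightarrow> Poly_Mapping.keys m \<subseteq> {1..n} \<and> (\<forall>i\<in>{1..n}. Poly_Mapping.lookup m i \<le> n - i)"

text \<open>p' is the Artin reduction of p: a K-linear combination of Artin monomials
  with p \<equiv> p' modulo (e_1,...,e_n).  (By the Artin basis theorem it exists and is unique.)\<close>
definition is_artin_reduction :: "nat \<Rightarrow> ('a::comm_ring_1) mpoly \<Rightarrow> 'a mpoly \<Rightarrow> bool" where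
  "is_artin_reduction n p p' \<longleftrightarrow>
     (\<forall>m\<in>Poly_Mapping.keys p'. artin_monomial n m) \<and> p - p' \<in> sym_ideal n"

end

theory Submission imports Defs "HOL-Combinatorics.Permutations" begin


definition expo :: "nat \<Rightarrow> (nat \<Rightarrow> nat) \<Rightarrow> (nat \<Rightarrow>\<^sub>0 nat)" where
  "expo n f = Abs_poly_mapping (\<lambda>i. if i \<in> {1..n} then f i else 0)"

lemma lookup_expo: "Poly_Mapping.lookup (expo n f) i = (if i \<in> {1..n} then f i else 0)"
proof -
  have "finite {i. (if i \<in> {1..n} then f i else 0) \<noteq> 0}"
    by (rule finite_subset[of _ "{1..n}"]) auto
  thus ?thesis unfolding expo_def by simp
qed

definition dl :: "nat \<Rightarrow> (nat \<Rightarrow> nat) \<Rightarrow> (nat \<Rightarrow>\<^sub>0 nat)" where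
  "dl n \<sigma> = expo n (\<lambda>i. n - \<sigma> i)"

definition Lf :: "nat \<Rightarrow> ('a::comm_ring_1) mpoly \<Rightarrow> 'a" where
  "Lf n g = (\<Sum>\<sigma>\<in>{\<sigma>. \<sigma> permutes {1..n}}. of_int (sign \<sigma>) * Poly_Mapping.lookup g (dl n \<sigma>))"

definition ind :: "nat set \<Rightarrow> (nat \<Rightarrow>\<^sub>0 nat)" where
  "ind S = (\<Sum>i\<in>S. Poly_Mapping.single i 1)"

lemma lookup_ind: "finite S \<Longrightarrow> Poly_Mapping.lookup (ind S) i = (if i \<in> S then 1 else 0)"
  unfolding ind_def by (simp add: lookup_sum lookup_single when_def)

lemma Sum_any_aux: "(\<Sum>aa. if k = a + aa then if m = aa then (c::'a::comm_ring_1) else 0 else 0) = (if k = a + m then c else 0)"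
proof -
  have "(\<Sum>aa. if k = a + aa then if m = aa then c else 0 else 0) = (\<Sum>aa. ((if k = a + m then c else 0) when aa = m))"
    by (rule Sum_any.cong) (auto simp: when_def)
  thus ?thesis by simp
qed

lemma lookup_mult_single_at:
  fixes h :: "('a::comm_ring_1) mpoly"
  shows   "Poly_Mapping.lookup (h * Poly_Mapping.single m c) (y + m) = Poly_Mapping.lookup h y * c"
proof -
  have "Poly_Mapping.lookup (h * Poly_Mapping.single m c) (y + m) =
        (\<Sum>l. Poly_Mapping.lookup h l * (c when y + m = l + m))"
    apply (simp add: lookup_mult lookup_single when_def) apply (simp only: Sum_any_aux) apply simp done
  also have "\<dots> = (\<Sum>l. (Poly_Mapping.lookup h l * c when l = y))"
    by (rule Sum_any.cong) (auto simp: when_def)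
  also have "\<dots> = Poly_Mapping.lookup h y * c" by simp
  finally show ?thesis .
qed

lemma lookup_mult_single_not:
  fixes h :: "('a::comm_ring_1) mpoly"
  assumes "\<forall>y. k \<noteq> y + m"
  shows "Poly_Mapping.lookup (h * Poly_Mapping.single m c) k = 0"
proof -
  have "Poly_Mapping.lookup (h * Poly_Mapping.single m c) k =
        (\<Sum>l. Poly_Mapping.lookup h l * (c when k = l + m))"
    apply (simp add: lookup_mult lookup_single when_def) apply (simp only: Sum_any_aux) done
  also have "\<dots> = (\<Sum>l. 0)"
    using assms by (simp add: when_def)
  finally show ?thesis by simp
qed

lemma Lf_add: "Lf n (f + g) = Lf n f + Lf n g"
  unfolding Lf_def by (simp add: lookup_add distrib_left sum.distrib)

lemma Lf_diff: "Lf n (f - g) = Lf n f - Lf n g"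
  unfolding Lf_def by (simp add: lookup_minus right_diff_distrib sum_subtractf)

lemma Lf_sum: "Lf n (sum F A) = (\<Sum>x\<in>A. Lf n (F x))"
  unfolding Lf_def by (simp add: lookup_sum sum_distrib_left sum.swap[of _ A])

lemma Lf_single: "Lf n (Poly_Mapping.single m c) =
   (\<Sum>\<sigma>\<in>{\<sigma>. \<sigma> permutes {1..n}}. of_int (sign \<sigma>) * (if m = dl n \<sigma> then c else 0))"
  unfolding Lf_def by (simp add: lookup_single when_def)

lemma var_pow: "(var i :: ('a::comm_ring_1) mpoly) ^ r = Poly_Mapping.single (Poly_Mapping.single i r) 1"
proof (induction r)
  case 0 thus ?case by simp
next
  case (Suc r)
  thus ?case by (simp add: var_def mult_single single_add[symmetric])
qed

lemma poly_monomials: "f = (\<Sum>a\<in>Poly_Mapping.keys f. Poly_Mapping.single a (Poly_Mapping.lookup f a))"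
  by (rule poly_mapping_eqI) (simp add: lookup_sum lookup_single when_def in_keys_iff)



lemma involution_sum_zero:
  fixes F :: "'b \<Rightarrow> 'a::ab_group_add"
  assumes "finite B" "\<forall>x\<in>B. \<iota> x \<in> B \<and> \<iota> (\<iota> x) = x \<and> \<iota> x \<noteq> x \<and> F (\<iota> x) = - F x"
  shows "sum F B = 0"
using assms proof (induction "card B" arbitrary: B rule: less_induct)
  case less
  show ?case
  proof (cases "B = {}")
    case True thus ?thesis by simp
  next
    case False
    then obtain x where x: "x \<in> B" by blast
    let ?B' = "B - {x, \<iota> x}"
    have ix: "\<iota> x \<in> B" "\<iota> x \<noteq> x" "F (\<iota> x) = - F x" using less.prems x by auto
    have sub: "\<forall>y\<in>?B'. \<iota> y \<in> ?B' \<and> \<iota> (\<iota> y) = y \<and> \<iota> y \<noteq> y \<and> F (\<iota> y) = - F y"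
      using less.prems x by (metis Diff_iff insertCI insertE singleton_iff)
    have c: "card ?B' < card B" using x less.prems(1) by (intro psubset_card_mono) auto
    have "sum F ?B' = 0"
      by (rule less.hyps[OF c]) (use less.prems(1) sub in auto)
    moreover have "sum F B = F x + sum F (B - {x})" using x less.prems(1) by (simp add: sum.remove)
    moreover have "sum F (B - {x}) = F (\<iota> x) + sum F ?B'"
    proof -
      have "\<iota> x \<in> B - {x}" using ix x by auto
      moreover have "B - {x} - {\<iota> x} = ?B'" by auto
      ultimately show ?thesis using less.prems(1) by (metis finite_Diff sum.remove)
    qed
    ultimately show ?thesis using ix by simp
  qed
qed

definition Bset :: "nat \<Rightarrow> nat \<Rightarrow> ((nat \<Rightarrow> nat) \<times> nat set) set" where
  "Bset n k = {x \<in> {\<sigma>. \<sigma> permutes {1..n}} \<times> {S. S \<subseteq> {1..n} \<and> card S = k}. \<forall>p\<in>snd x. fst x p \<noteq> n}"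

definition iota :: "(nat \<Rightarrow> nat) \<times> nat set \<Rightarrow> (nat \<Rightarrow> nat) \<times> nat set" where
  "iota x = (let \<sigma> = fst x; S = snd x; t = Max (\<sigma> ` S); p = inv \<sigma> t; q = inv \<sigma> (Suc t)
            in (\<sigma> \<circ> Transposition.transpose p q, insert q (S - {p})))"

lemma iota_props:
  assumes x: "(\<sigma>, S) \<in> Bset n k" and k: "1 \<le> k"
  defines "t \<equiv> Max (\<sigma> ` S)"
  defines "p \<equiv> inv \<sigma> t" and "q \<equiv> inv \<sigma> (Suc t)"
  shows "iota (\<sigma>,S) = (\<sigma> \<circ> Transposition.transpose p q, insert q (S - {p}))"
    and "p \<in> S" "q \<notin> S" "q \<in> {1..n}" "\<sigma> p = t" "\<sigma> q = Suc t" "Suc t \<le> n" "p \<noteq> q"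
proof -
  have perm: "\<sigma> permutes {1..n}" and Ssub: "S \<subseteq> {1..n}" and cS: "card S = k"
    and nn: "\<forall>p\<in>S. \<sigma> p \<noteq> n"
    using x unfolding Bset_def by auto
  have fS: "finite S" using Ssub finite_subset by blast
  have ne: "S \<noteq> {}" using cS k by auto
  have "t \<in> \<sigma> ` S" unfolding t_def using fS ne by simp
  then obtain p0 where p0: "p0 \<in> S" "\<sigma> p0 = t" by auto
  have pp0: "p = p0" unfolding p_def using p0 permutes_inverses[OF perm] by metis
  thus "p \<in> S" "\<sigma> p = t" using p0 by auto
  have "p0 \<in> {1..n}" using p0 Ssub by auto
  hence "t \<in> {1..n}" using p0 permutes_in_image[OF perm] by auto
  moreover have "t \<noteq> n" using nn p0 by auto
  ultimately show st: "Suc t \<le> n" by auto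
  show sq: "\<sigma> q = Suc t" unfolding q_def using permutes_inverses[OF perm] by metis
  have "inv \<sigma> permutes {1..n}" using perm by (rule permutes_inv)
  thus "q \<in> {1..n}" unfolding q_def using st permutes_in_image by fastforce
  show "q \<notin> S"
  proof
    assume "q \<in> S"
    hence "\<sigma> q \<le> t" unfolding t_def using fS by simp
    thus False using sq by simp
  qed
  show "p \<noteq> q" using sq \<open>\<sigma> p = t\<close> by auto
  show "iota (\<sigma>,S) = (\<sigma> \<circ> Transposition.transpose p q, insert q (S - {p}))"
    unfolding iota_def t_def p_def q_def Let_def by simp
qed

lemma dl_decomp:
  assumes perm: "\<sigma> permutes {1..n}" and Ssub: "S \<subseteq> {1..n}" and nn: "\<forall>p\<in>S. \<sigma> p \<noteq> n"
  shows "dl n \<sigma> = expo n (\<lambda>i. n - \<sigma> i - (if i \<in> S then 1 else 0)) + ind S"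
proof (rule poly_mapping_eqI)
  fix i
  have fS: "finite S" using Ssub finite_subset by blast
  show "Poly_Mapping.lookup (dl n \<sigma>) i = Poly_Mapping.lookup (expo n (\<lambda>i. n - \<sigma> i - (if i \<in> S then 1 else 0)) + ind S) i"
  proof (cases "i \<in> {1..n}")
    case True
    hence "\<sigma> i \<in> {1..n}" using permutes_in_image[OF perm] by auto
    thus ?thesis using True nn fS by (auto simp: dl_def lookup_add lookup_expo lookup_ind)
  next
    case False
    thus ?thesis using Ssub fS by (auto simp: dl_def lookup_add lookup_expo lookup_ind)
  qed
qed



lemma iota_good:
  fixes h :: "('a::comm_ring_1) mpoly"
  assumes x: "x \<in> Bset n k" and k: "1 \<le> k"
  defines "G \<equiv> (\<lambda>x::(nat\<Rightarrow>nat) \<times> nat set. of_int (sign (fst x)) *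
      Poly_Mapping.lookup (h * Poly_Mapping.single (ind (snd x)) 1) (dl n (fst x)))"
  shows "iota x \<in> Bset n k \<and> iota (iota x) = x \<and> iota x \<noteq> x \<and> G (iota x) = - G x"
proof -
  obtain \<sigma> S where xs: "x = (\<sigma>, S)" by (cases x)
  have xB: "(\<sigma>, S) \<in> Bset n k" using x xs by simp
  have perm: "\<sigma> permutes {1..n}" and Ssub: "S \<subseteq> {1..n}" and cS: "card S = k"
    and nn: "\<forall>p\<in>S. \<sigma> p \<noteq> n"
    using xB unfolding Bset_def by auto
  have fS: "finite S" using Ssub finite_subset by blast
  define t where "t = Max (\<sigma> ` S)"
  define p where "p = inv \<sigma> t"
  define q where "q = inv \<sigma> (Suc t)"
  note props = iota_props[OF xB k, folded t_def, folded p_def q_def]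
  have pS: "p \<in> S" and qS: "q \<notin> S" and qn: "q \<in> {1..n}" and sp: "\<sigma> p = t" and sq: "\<sigma> q = Suc t"
    and st: "Suc t \<le> n" and pq: "p \<noteq> q" using props by auto
  have pn: "p \<in> {1..n}" using pS Ssub by auto
  define \<sigma>' where "\<sigma>' = \<sigma> \<circ> Transposition.transpose p q"
  define S' where "S' = insert q (S - {p})"
  have ix: "iota x = (\<sigma>', S')" using props(1) xs \<sigma>'_def S'_def by simp
  have perm': "\<sigma>' permutes {1..n}" unfolding \<sigma>'_def
    by (rule permutes_compose[OF permutes_swap_id[OF pn qn] perm])
  have S'sub: "S' \<subseteq> {1..n}" unfolding S'_def using Ssub qn by auto
  have cS': "card S' = k" unfolding S'_def using fS pS qS cS
    by (simp add: card_insert_disjoint card_Diff_singleton)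
    (metis One_nat_def Suc_pred card_gt_0_iff emptyE k le_less_trans less_one not_le)
  have s'p: "\<sigma>' p = Suc t" and s'q: "\<sigma>' q = t" unfolding \<sigma>'_def using sp sq by auto
  have s'o: "\<And>i. i \<noteq> p \<Longrightarrow> i \<noteq> q \<Longrightarrow> \<sigma>' i = \<sigma> i" unfolding \<sigma>'_def by auto
  have nn': "\<forall>i\<in>S'. \<sigma>' i \<noteq> n"
  proof
    fix i assume "i \<in> S'"
    thus "\<sigma>' i \<noteq> n" using s'q st nn s'o qS unfolding S'_def by (cases "i = q") auto
  qed
  have B': "(\<sigma>', S') \<in> Bset n k" unfolding Bset_def using perm' S'sub cS' nn' by auto
  have img: "\<sigma>' ` S' = \<sigma> ` S"
  proof -
    have "\<sigma>' ` S' = insert t (\<sigma>' ` (S - {p}))" unfolding S'_def using s'q by simp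
    also have "\<sigma>' ` (S - {p}) = \<sigma> ` (S - {p})" using s'o qS by (intro image_cong) auto
    also have "insert t (\<sigma> ` (S - {p})) = \<sigma> ` S" using sp pS by blast
    finally show ?thesis .
  qed
  have ii: "iota (\<sigma>', S') = (\<sigma>' \<circ> Transposition.transpose q p, insert p (S' - {q}))"
  proof -
    have t': "Max (\<sigma>' ` S') = t" using img t_def by simp
    have p': "inv \<sigma>' t = q" using s'q permutes_inverses[OF perm'] by metis
    have q': "inv \<sigma>' (Suc t) = p" using s'p permutes_inverses[OF perm'] by metis
    show ?thesis using iota_props(1)[OF B' k] t' p' q' by simp
  qed
  have bk: "(\<sigma>' \<circ> Transposition.transpose q p, insert p (S' - {q})) = (\<sigma>, S)"
  proof -
    have "\<sigma>' \<circ> Transposition.transpose q p = \<sigma>"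
      unfolding \<sigma>'_def by (simp add: o_assoc[symmetric] transpose_commute)
    moreover have "insert p (S' - {q}) = S" unfolding S'_def using pS qS pq by auto
    ultimately show ?thesis by simp
  qed
  have neq: "iota x \<noteq> x" using ix xs S'_def qS by auto
  have sgn: "sign \<sigma>' = - sign \<sigma>"
  proof -
    have "permutation \<sigma>" using perm by (rule permutes_imp_permutation[rotated]) simp
    moreover have "permutation (Transposition.transpose p q)"
      using permutes_swap_id[OF pn qn] by (rule permutes_imp_permutation[rotated]) simp
    ultimately show ?thesis unfolding \<sigma>'_def using pq by (simp add: sign_compose sign_swap_id)
  qed
  define y where "y = expo n (\<lambda>i. n - \<sigma> i - (if i \<in> S then 1 else 0))"
  have d1: "dl n \<sigma> = y + ind S" unfolding y_def by (rule dl_decomp[OF perm Ssub nn])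
  have "y = expo n (\<lambda>i. n - \<sigma>' i - (if i \<in> S' then 1 else 0))"
    unfolding y_def
  proof (rule arg_cong[where f = "expo n"], rule ext)
    fix i
    show "n - \<sigma> i - (if i \<in> S then 1 else 0) = n - \<sigma>' i - (if i \<in> S' then 1 else 0)"
    proof (cases "i = p \<or> i = q")
      case True
      thus ?thesis using sp sq s'p s'q pS qS pq unfolding S'_def by auto
    next
      case False
      thus ?thesis using s'o unfolding S'_def by auto
    qed
  qed
  hence d2: "dl n \<sigma>' = y + ind S'" using dl_decomp[OF perm' S'sub nn'] by simp
  have "G (\<sigma>', S') = - G (\<sigma>, S)"
    unfolding G_def using d1 d2 sgn by (simp add: lookup_mult_single_at)
  hence "G (iota x) = - G x" using ix xs by simp
  thus ?thesis using ix ii bk B' neq xs by simp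
qed

lemma Lf_elem_sym:
  fixes h :: "('a::comm_ring_1) mpoly"
  assumes k: "1 \<le> k"
  shows "Lf n (h * elem_sym n k) = 0"
proof -
  define Pm where "Pm = {\<sigma>. \<sigma> permutes {1..n}}"
  define Sk where "Sk = {S. S \<subseteq> {1..n} \<and> card S = k}"
  define G where "G = (\<lambda>x::(nat\<Rightarrow>nat) \<times> nat set. of_int (sign (fst x)) *
      Poly_Mapping.lookup (h * Poly_Mapping.single (ind (snd x)) 1) (dl n (fst x)))"
  have fin: "finite Pm" "finite Sk" unfolding Pm_def Sk_def
    by (auto intro: finite_permutations finite_subset[of _ "Pow {1..n}"])
  have "Lf n (h * elem_sym n k) = (\<Sum>\<sigma>\<in>Pm. \<Sum>S\<in>Sk. G (\<sigma>,S))"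
    unfolding Lf_def elem_sym_def G_def Pm_def Sk_def ind_def
    by (simp add: sum_distrib_left lookup_sum)
  also have "\<dots> = (\<Sum>(\<sigma>,S)\<in>Pm \<times> Sk. G (\<sigma>,S))" by (rule sum.cartesian_product)
  also have "\<dots> = sum G (Pm \<times> Sk)" by (simp add: case_prod_beta')
  also have "\<dots> = sum G (Bset n k)"
  proof (rule sum.mono_neutral_right)
    show "finite (Pm \<times> Sk)" using fin by simp
    show "Bset n k \<subseteq> Pm \<times> Sk" unfolding Bset_def Pm_def Sk_def by auto
    show "\<forall>x\<in>Pm \<times> Sk - Bset n k. G x = 0"
    proof
      fix x assume xx: "x \<in> Pm \<times> Sk - Bset n k"
      obtain \<sigma> S where xs: "x = (\<sigma>, S)" by (cases x)
      have Ssub: "S \<subseteq> {1..n}" using xx xs unfolding Sk_def by auto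
      have fS: "finite S" using Ssub finite_subset by blast
      obtain p where pS: "p \<in> S" and sp: "\<sigma> p = n"
        using xx xs unfolding Bset_def Pm_def Sk_def by auto
      have "\<forall>y. dl n \<sigma> \<noteq> y + ind S"
      proof (intro allI notI)
        fix y assume "dl n \<sigma> = y + ind S"
        hence "Poly_Mapping.lookup (dl n \<sigma>) p = Poly_Mapping.lookup (y + ind S) p" by simp
        thus False using pS Ssub sp fS by (auto simp: dl_def lookup_expo lookup_add lookup_ind)
      qed
      thus "G x = 0" unfolding G_def xs by (simp add: lookup_mult_single_not)
    qed
  qed
  also have "\<dots> = 0"
  proof (rule involution_sum_zero[where \<iota> = iota])
    show "finite (Bset n k)" unfolding Bset_def using fin Pm_def Sk_def
      by (auto intro: finite_subset[of _ "Pm \<times> Sk"])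
    show "\<forall>x\<in>Bset n k. iota x \<in> Bset n k \<and> iota (iota x) = x \<and> iota x \<noteq> x \<and> G (iota x) = - G x"
      using iota_good[OF _ k] unfolding G_def by blast
  qed
  finally show ?thesis .
qed



definition mu :: "nat \<Rightarrow> (nat \<Rightarrow>\<^sub>0 nat) \<Rightarrow> (nat \<Rightarrow>\<^sub>0 nat)" where
  "mu n a = expo n (\<lambda>i. n - i - Poly_Mapping.lookup a i)"

lemma artin_out: "artin_monomial n a \<Longrightarrow> i \<notin> {1..n} \<Longrightarrow> Poly_Mapping.lookup a i = 0"
  unfolding artin_monomial_def by (auto simp: in_keys_iff)

lemma artin_le: "artin_monomial n a \<Longrightarrow> i \<in> {1..n} \<Longrightarrow> Poly_Mapping.lookup a i \<le> n - i"
  unfolding artin_monomial_def by auto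

lemma mu_add_self: "artin_monomial n a \<Longrightarrow> mu n a + a = dl n id"
proof (rule poly_mapping_eqI)
  fix i assume a: "artin_monomial n a"
  show "Poly_Mapping.lookup (mu n a + a) i = Poly_Mapping.lookup (dl n id) i"
  proof (cases "i \<in> {1..n}")
    case True thus ?thesis using artin_le[OF a True] by (simp add: mu_def dl_def lookup_add lookup_expo)
  next
    case False thus ?thesis using artin_out[OF a False] by (auto simp: mu_def dl_def lookup_add lookup_expo)
  qed
qed

lemma dl_id_iff:
  assumes perm: "\<sigma> permutes {1..n}" and eq: "dl n \<sigma> = dl n id"
  shows "\<sigma> = id"
proof (rule ext)
  fix i
  show "\<sigma> i = id i"
  proof (cases "i \<in> {1..n}")
    case True
    hence "\<sigma> i \<in> {1..n}" using permutes_in_image[OF perm] by auto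
    moreover have "Poly_Mapping.lookup (dl n \<sigma>) i = Poly_Mapping.lookup (dl n id) i" using eq by simp
    ultimately show ?thesis using True by (auto simp: dl_def lookup_expo)
  next
    case False thus ?thesis using permutes_not_in[OF perm] by auto
  qed
qed

lemma mu_add_less:
  assumes a: "artin_monomial n a" and a': "artin_monomial n a'" and lt: "a < a'"
    and perm: "\<sigma> permutes {1..n}"
  shows "mu n a + a' \<noteq> dl n \<sigma>"
proof
  assume eq: "mu n a + a' = dl n \<sigma>"
  have eqi: "\<And>i. Poly_Mapping.lookup (mu n a) i + Poly_Mapping.lookup a' i = Poly_Mapping.lookup (dl n \<sigma>) i"
    using eq by (metis lookup_add)
  obtain j where j1: "Poly_Mapping.lookup a j < Poly_Mapping.lookup a' j"
     and j2: "\<forall>k<j. Poly_Mapping.lookup a k = Poly_Mapping.lookup a' k"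
    using lt by (auto simp: less_poly_mapping.rep_eq less_fun_def)
  have jn: "j \<in> {1..n}" using j1 artin_out[OF a'] by (cases "j \<in> {1..n}") auto
  have fixd: "\<sigma> i = i" if i1: "1 \<le> i" and ij: "i < j" for i
  proof -
    have iN: "i \<in> {1..n}" using i1 ij jn by auto
    have "\<sigma> i \<in> {1..n}" using permutes_in_image[OF perm] iN by auto
    moreover have "Poly_Mapping.lookup a i \<le> n - i" by (rule artin_le[OF a iN])
    moreover have "Poly_Mapping.lookup a i = Poly_Mapping.lookup a' i" using j2 ij by auto
    ultimately show ?thesis using eqi[of i] iN by (auto simp: mu_def dl_def lookup_expo)
  qed
  have sj: "\<sigma> j \<in> {1..n}" using permutes_in_image[OF perm] jn by auto
  have "Poly_Mapping.lookup a j \<le> n - j" by (rule artin_le[OF a jn])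
  hence "\<sigma> j < j" using eqi[of j] jn sj j1 by (auto simp: mu_def dl_def lookup_expo)
  hence "\<sigma> (\<sigma> j) = \<sigma> j" using fixd sj by auto
  hence "\<sigma> j = j" using permutes_inj[OF perm] by (meson injD)
  thus False using \<open>\<sigma> j < j\<close> by simp
qed

lemma Lf_single_dl_id: "Lf n (Poly_Mapping.single (dl n id) c) = c"
proof -
  have "Lf n (Poly_Mapping.single (dl n id) c) =
    (\<Sum>\<sigma>\<in>{\<sigma>. \<sigma> permutes {1..n}}. if \<sigma> = id then c else 0)"
    unfolding Lf_single
  proof (rule sum.cong)
    fix \<sigma> assume "\<sigma> \<in> {\<sigma>. \<sigma> permutes {1..n}}"
    hence "\<sigma> permutes {1..n}" by simp
    thus "of_int (sign \<sigma>) * (if dl n id = dl n \<sigma> then c else 0) = (if \<sigma> = id then c else 0)"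
      using dl_id_iff[of \<sigma> n] by auto
  qed simp
  also have "\<dots> = c"
  proof -
    have "id \<in> {\<sigma>. \<sigma> permutes {1..n}}" by (simp add: permutes_id)
    moreover have "finite {\<sigma>. \<sigma> permutes {1..n}}" by (rule finite_permutations) simp
    ultimately show ?thesis by (subst sum.delta) auto
  qed
  finally show ?thesis .
qed

lemma Lf_single_zero: "(\<forall>\<sigma>. \<sigma> permutes {1..n} \<longrightarrow> m \<noteq> dl n \<sigma>) \<Longrightarrow> Lf n (Poly_Mapping.single m c) = 0"
  unfolding Lf_single by (rule sum.neutral) auto

lemma Lf_min:
  fixes q :: "('a::comm_ring_1) mpoly"
  assumes art: "\<forall>m\<in>Poly_Mapping.keys q. artin_monomial n m" and ne: "Poly_Mapping.keys q \<noteq> {}"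
    and aM: "a = Min (Poly_Mapping.keys q)"
  shows "Lf n (Poly_Mapping.single (mu n a) 1 * q) = Poly_Mapping.lookup q a"
proof -
  have aK: "a \<in> Poly_Mapping.keys q" using aM ne by simp
  have "Poly_Mapping.single (mu n a) 1 * q = Poly_Mapping.single (mu n a) 1 *
     (\<Sum>b\<in>Poly_Mapping.keys q. Poly_Mapping.single b (Poly_Mapping.lookup q b))"
    by (subst poly_monomials[of q]) simp
  also have "\<dots> = (\<Sum>b\<in>Poly_Mapping.keys q. Poly_Mapping.single (mu n a + b) (Poly_Mapping.lookup q b))"
    by (simp add: sum_distrib_left mult_single)
  finally have "Lf n (Poly_Mapping.single (mu n a) 1 * q) =
     (\<Sum>b\<in>Poly_Mapping.keys q. Lf n (Poly_Mapping.single (mu n a + b) (Poly_Mapping.lookup q b)))"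
    by (simp add: Lf_sum)
  also have "\<dots> = (\<Sum>b\<in>Poly_Mapping.keys q. if b = a then Poly_Mapping.lookup q a else 0)"
  proof (rule sum.cong)
    fix b assume bK: "b \<in> Poly_Mapping.keys q"
    show "Lf n (Poly_Mapping.single (mu n a + b) (Poly_Mapping.lookup q b)) = (if b = a then Poly_Mapping.lookup q a else 0)"
    proof (cases "b = a")
      case True thus ?thesis using mu_add_self art aK by (simp add: Lf_single_dl_id)
    next
      case False
      have "a \<le> b" using aM bK by simp
      hence "a < b" using False by simp
      thus ?thesis using False mu_add_less art aK bK by (auto intro!: Lf_single_zero)
    qed
  qed simp
  also have "\<dots> = Poly_Mapping.lookup q a" using aK by simp
  finally show ?thesis .
qed

lemma Lf_ideal:
  fixes g :: "('a::comm_ring_1) mpoly"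
  assumes "g \<in> sym_ideal n"
  shows "Lf n (Poly_Mapping.single m 1 * g) = 0"
proof -
  obtain qf where g: "g = (\<Sum>k=1..n. qf k * elem_sym n k)"
    using assms unfolding sym_ideal_def by auto
  have "Poly_Mapping.single m 1 * g = (\<Sum>k=1..n. (Poly_Mapping.single m 1 * qf k) * elem_sym n k)"
    unfolding g by (simp add: sum_distrib_left mult.assoc)
  hence "Lf n (Poly_Mapping.single m 1 * g) = (\<Sum>k=1..n. Lf n ((Poly_Mapping.single m 1 * qf k) * elem_sym n k))"
    by (simp add: Lf_sum)
  also have "\<dots> = 0" by (rule sum.neutral) (auto intro: Lf_elem_sym)
  finally show ?thesis .
qed

theorem lemma2p7:
  fixes n r :: nat and v :: "nat \<Rightarrow>\<^sub>0 nat" and p p' :: "('a::field) mpoly"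
  assumes "CHAR('a) = 0 \<or> CHAR('a) > n"
    and "1 \<le> n"
    and "Poly_Mapping.keys v \<subseteq> {1..n}"
    and "Poly_Mapping.lookup v 1 = 0"
    and "p = var 1 ^ r * Poly_Mapping.single v 1"
    and "is_artin_reduction n p p'"
  shows "\<forall>m\<in>Poly_Mapping.keys p'. r \<le> Poly_Mapping.lookup m 1"
proof (rule ccontr)
  assume "\<not> ?thesis"
  then obtain m where mK: "m \<in> Poly_Mapping.keys p'" and mr: "Poly_Mapping.lookup m 1 < r"
    by (auto simp: not_le)
  have art: "\<forall>m\<in>Poly_Mapping.keys p'. artin_monomial n m" and id: "p - p' \<in> sym_ideal n"
    using assms(6) unfolding is_artin_reduction_def by auto
  have ne: "Poly_Mapping.keys p' \<noteq> {}" using mK by auto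
  define a where "a = Min (Poly_Mapping.keys p')"
  have aK: "a \<in> Poly_Mapping.keys p'" using ne a_def by simp
  have am: "a \<le> m" using mK a_def by simp
  have a1: "Poly_Mapping.lookup a 1 \<le> Poly_Mapping.lookup m 1"
  proof (cases "a = m")
    case False
    hence "a < m" using am by simp
    then obtain j where j1: "Poly_Mapping.lookup a j < Poly_Mapping.lookup m j"
       and j2: "\<forall>k<j. Poly_Mapping.lookup a k = Poly_Mapping.lookup m k"
      by (auto simp: less_poly_mapping.rep_eq less_fun_def)
    have "j \<noteq> 0" using j1 artin_out[of n m 0] art mK by (cases "j = 0") auto
    thus ?thesis using j1 j2 by (cases "j = 1") auto
  qed simp
  have aart: "artin_monomial n a" using art aK by auto
  have "Lf n (Poly_Mapping.single (mu n a) 1 * (p - p')) = 0" by (rule Lf_ideal[OF id])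
  hence "Lf n (Poly_Mapping.single (mu n a) 1 * p) - Lf n (Poly_Mapping.single (mu n a) 1 * p') = 0"
    by (simp add: right_diff_distrib Lf_diff)
  moreover have "Lf n (Poly_Mapping.single (mu n a) 1 * p') = Poly_Mapping.lookup p' a"
    by (rule Lf_min[OF art ne a_def])
  moreover have "Lf n (Poly_Mapping.single (mu n a) 1 * p) = 0"
  proof -
    have "Poly_Mapping.single (mu n a) 1 * p = Poly_Mapping.single (mu n a + (Poly_Mapping.single 1 r + v)) (1::'a)"
      using assms(5) by (simp add: var_pow mult_single)
    moreover have "\<forall>\<sigma>. \<sigma> permutes {1..n} \<longrightarrow> mu n a + (Poly_Mapping.single 1 r + v) \<noteq> dl n \<sigma>"
    proof (intro allI impI notI)
      fix \<sigma> assume perm: "\<sigma> permutes {1..n}" and eq: "mu n a + (Poly_Mapping.single 1 r + v) = dl n \<sigma>"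
      have 1: "1 \<in> {1..n}" using assms(2) by simp
      have "\<sigma> 1 \<in> {1..n}" using permutes_in_image[OF perm] 1 by auto
      moreover have "Poly_Mapping.lookup a 1 \<le> n - 1" using artin_le[OF aart 1] .
      moreover have "Poly_Mapping.lookup (mu n a + (Poly_Mapping.single 1 r + v)) 1 = Poly_Mapping.lookup (dl n \<sigma>) 1"
        using eq by simp
      ultimately show False using 1 a1 mr
        by (auto simp: mu_def dl_def lookup_expo lookup_add)
    qed
    ultimately show ?thesis by (simp add: Lf_single_zero)
  qed
  ultimately have "Poly_Mapping.lookup p' a = 0" by simp
  thus False using aK by (simp add: in_keys_iff)
qed

end
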